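(* Let $C\ge0$ and $a>0$ be real numbers, $g(\xi)=Ce^{-a|\xi|}$, and let $g_m$ be the $m$-fold normalized convolution of $g$ ($g_1=g$, $g_{m+1}=g_m*g$). Then for every integer $m\ge1$ and every $\xi\ne0$, $$g_m(\xi)=2\sqrt{aC}\left(\frac{C|\xi|}{2\pi}\right)^{m-1/2}\frac{K_{m-1/2}(a|\xi|)}{\Gamma(m)},$$ and consequently, for all $\xi\in\mathbb{R}$, $$g_m(\xi)\le C e^{-a|\xi|}\left(\frac{C}{\pi a}\right)^{m-1}\frac{\Gamma\!\left(\frac{1+a|\xi|}{2}+m-1\right)}{\Gamma(m)\,\Gamma\!\left(\frac{1+a|\xi|}{2}\right)} .$$
   Context: Convolution is normalized: $f*h(\xi)=\frac1{2\pi}\int_{\mathbb{R}}f(\eta)h(\xi-\eta)\,d\eta$. $K_\nu$ is the modified Bessel function of the second kind of order $\nu$. *)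

theory Defs
  imports "HOL-Analysis.Analysis"
begin

definition nconv :: "(real \<Rightarrow> real) \<Rightarrow> (real \<Rightarrow> real) \<Rightarrow> real \<Rightarrow> real" where
  "nconv f h xi = (1 / (2 * pi)) * (LINT eta|lborel. f eta * h (xi - eta))"

text \<open>m-fold normalized convolution: g_1 = g, g_(m+1) = g_m * g (g_0 is a dummy value, unused).\<close>
fun conv_pow :: "(real \<Rightarrow> real) \<Rightarrow> nat \<Rightarrow> real \<Rightarrow> real" where
  "conv_pow g 0 = g"
| "conv_pow g (Suc 0) = g"
| "conv_pow g (Suc (Suc n)) = nconv (conv_pow g (Suc n)) g"

text \<open>Modified Bessel function of the second kind, via the standard integral representation
  K_nu(x) = integral_0^infinity exp(-x cosh t) cosh(nu t) dt, for x > 0.\<close>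
definition besselK :: "real \<Rightarrow> real \<Rightarrow> real" where
  "besselK nu x = (LBINT t:{0..}. exp (- x * cosh t) * cosh (nu * t))"

end

theory Submission
  imports Defs "HOL-Probability.Distributions"
begin


fun Q :: "nat \<Rightarrow> real \<Rightarrow> real" where
  "Q 0 y = 1"
| "Q (Suc 0) y = 1 + y"
| "Q (Suc (Suc n)) y = (2 * real n + 3) * Q (Suc n) y + y^2 * Q n y"

lemma Q_nonneg: "y \<ge> 0 \<Longrightarrow> Q n y \<ge> 0"
  by (induction n y rule: Q.induct) auto

lemma Q_deriv: "(Q (Suc n) has_real_derivative (Q (Suc n) y - y * Q n y)) (at y)"
proof (induction n arbitrary: y rule: less_induct)
  case (less n)
  show ?case
  proof (cases n)
    case 0
    have "Q (Suc 0) = (\<lambda>y. 1 + y)" by (rule ext) simp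
    then show ?thesis using 0 by (auto intro!: derivative_eq_intros)
  next
    case (Suc k)
    have e: "Q (Suc (Suc k)) = (\<lambda>y. (2 * real k + 3) * Q (Suc k) y + y^2 * Q k y)" by (rule ext) simp
    have IH: "(Q (Suc k) has_real_derivative (Q (Suc k) y - y * Q k y)) (at y)"
      using less Suc by auto
    show ?thesis
    proof (cases k)
      case 0
      have "Q (Suc (Suc 0)) = (\<lambda>y. y^2 + 3 * y + 3)" by (rule ext) (simp add: algebra_simps)
      moreover have "((\<lambda>y. y^2 + 3 * y + 3) has_real_derivative 2*y+3) (at y)"
        by (auto intro!: derivative_eq_intros)
      ultimately show ?thesis using Suc 0 by (simp add: algebra_simps power2_eq_square)
    next
      case (Suc j)
      have IH2: "(Q (Suc j) has_real_derivative (Q (Suc j) y - y * Q j y)) (at y)"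
        using less \<open>n = Suc k\<close> Suc by auto
      have "(Q (Suc (Suc k)) has_real_derivative ((2 * real k + 3) * (Q (Suc k) y - y * Q k y) + ((2 * y) * Q k y + y^2 * (Q (Suc j) y - y * Q j y)))) (at y)"
        unfolding e using IH IH2 Suc
        by (auto intro!: derivative_eq_intros simp del: Q.simps)
      note d = this
      show ?thesis unfolding \<open>n = Suc k\<close>
        by (rule DERIV_cong[OF d]) (simp add: Suc algebra_simps power2_eq_square)
    qed
  qed
qed

lemma deriv_split0:
  fixes f f1 f2 :: "real \<Rightarrow> real"
  assumes d1: "(f1 has_real_derivative D) (at 0)" and d2: "(f2 has_real_derivative D) (at 0)"
    and e1: "\<And>y. y \<ge> 0 \<Longrightarrow> f y = f1 y" and e2: "\<And>y. y \<le> 0 \<Longrightarrow> f y = f2 y"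
  shows "(f has_real_derivative D) (at 0)"
proof -
  have r1: "((\<lambda>y. (f1 y - f1 0) / (y - 0)) \<longlongrightarrow> D) (at 0)"
    using d1 by (simp add: has_field_derivative_iff)
  have r2: "((\<lambda>y. (f2 y - f2 0) / (y - 0)) \<longlongrightarrow> D) (at 0)"
    using d2 by (simp add: has_field_derivative_iff)
  have "((\<lambda>y. (f y - f 0) / (y - 0)) \<longlongrightarrow> D) (at_right 0)"
  proof -
    have "((\<lambda>y. (f1 y - f1 0) / (y - 0)) \<longlongrightarrow> D) (at_right 0)"
      using r1 by (simp add: filterlim_at_split)
    moreover have "eventually (\<lambda>y. (f1 y - f1 0) / (y - 0) = (f y - f 0) / (y - 0)) (at_right (0::real))"
      using eventually_at_right_less[of 0] by eventually_elim (auto simp: e1)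
    ultimately show ?thesis by (rule Lim_transform_eventually)
  qed
  moreover have "((\<lambda>y. (f y - f 0) / (y - 0)) \<longlongrightarrow> D) (at_left 0)"
  proof -
    have "((\<lambda>y. (f2 y - f2 0) / (y - 0)) \<longlongrightarrow> D) (at_left 0)"
      using r2 by (simp add: filterlim_at_split)
    moreover have "eventually (\<lambda>y. (f2 y - f2 0) / (y - 0) = (f y - f 0) / (y - 0)) (at_left (0::real))"
    proof -
      have "eventually (\<lambda>y. y \<in> {-1<..<0}) (at_left (0::real))" by (rule eventually_at_left_real) simp
      then show ?thesis by eventually_elim (auto simp: e2)
    qed
    ultimately show ?thesis by (rule Lim_transform_eventually)
  qed
  ultimately show ?thesis by (simp add: has_field_derivative_iff filterlim_at_split)
qed

lemma deriv_pieces: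
  fixes f fa fb :: "real \<Rightarrow> real"
  assumes d1: "\<And>y. (fa has_real_derivative D1 y) (at y)" and d2: "\<And>y. (fb has_real_derivative D2 y) (at y)"
    and D0: "D1 0 = D2 0"
    and e1: "\<And>y. y \<ge> 0 \<Longrightarrow> f y = fa y" and e2: "\<And>y. y \<le> 0 \<Longrightarrow> f y = fb y"
  shows "(f has_real_derivative (if y \<ge> 0 then D1 y else D2 y)) (at y)"
proof -
  consider "y > 0" | "y < 0" | "y = 0" by linarith
  then show ?thesis
  proof cases
    case 1
    have "(f has_real_derivative D1 y) (at y)" using 1
      by (intro has_field_derivative_transform_within_open[OF d1[of y], of "{0<..}"]) (auto simp: e1)
    then show ?thesis using 1 by simp
  next
    case 2
    have "(f has_real_derivative D2 y) (at y)" using 2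
      by (intro has_field_derivative_transform_within_open[OF d2[of y], of "{..<0}"]) (auto simp: e2)
    then show ?thesis using 2 by simp
  next
    case 3
    show ?thesis using 3 deriv_split0[OF d1[of 0] d2[of 0, folded D0] e1 e2] by simp
  qed
qed

lemma Q_isCont: "isCont (Q n) y"
proof (cases n)
  case 0
  have "Q 0 = (\<lambda>y. 1)" by (rule ext) simp
  then show ?thesis using 0 by simp
next
  case (Suc k)
  then show ?thesis using Q_deriv[of k y] DERIV_isCont by blast
qed

lemma Q_cont_on[continuous_intros]: "continuous_on A f \<Longrightarrow> continuous_on A (\<lambda>x. Q n (f x))"
  by (rule continuous_on_compose2[of UNIV "Q n"]) (auto simp: continuous_at_imp_continuous_on Q_isCont)

lemma Q_isCont'[continuous_intros]: "isCont f x \<Longrightarrow> isCont (\<lambda>x. Q n (f x)) x"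
  using Q_isCont isCont_o2 by blast

definition Gp :: "nat \<Rightarrow> real \<Rightarrow> real" where "Gp n y = exp (-y) * Q n y / fact n"
definition Dp :: "nat \<Rightarrow> real \<Rightarrow> real" where "Dp n y = - exp (-y) * y * Q n y / fact (Suc n)"
definition G :: "nat \<Rightarrow> real \<Rightarrow> real" where "G n y = Gp n \<bar>y\<bar>"
definition D :: "nat \<Rightarrow> real \<Rightarrow> real" where "D n y = (if y \<ge> 0 then Dp n y else - Dp n (-y))"

lemma Gp_deriv: "(Gp (Suc n) has_real_derivative Dp n y) (at y)"
proof -
  have "((\<lambda>y. exp (-y) * Q (Suc n) y / fact (Suc n)) has_real_derivative
        (- exp (-y) * Q (Suc n) y + exp (-y) * (Q (Suc n) y - y * Q n y)) / fact (Suc n)) (at y)"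
    by (auto intro!: derivative_eq_intros Q_deriv)
  then show ?thesis unfolding Gp_def[abs_def] Dp_def
    by (rule DERIV_cong) (simp add: algebra_simps)
qed

lemma aux_Dp:
  fixes E A B y F r :: real assumes "F > 0" "r \<ge> 0"
  shows "(E*y*A - E*A - E*y*(A - y*B)) / ((r+2)*((r+1)*F)) =
    E*((2*r+3)*A + y^2*B)/((r+2)*((r+1)*F)) - 2*(E*A/((r+1)*F))"
proof -
  have a: "r + 1 > 0" "r + 2 > 0" using assms by linarith+
  have "2*(E*A/((r+1)*F)) = ((r+2)*(2*E*A))/((r+2)*((r+1)*F))"
    using a assms by (subst mult_divide_mult_cancel_left) auto
  also have "E*((2*r+3)*A + y^2*B)/((r+2)*((r+1)*F)) - \<dots> = (E*((2*r+3)*A + y^2*B) - (r+2)*(2*E*A))/((r+2)*((r+1)*F))"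
    by (rule diff_divide_distrib[symmetric])
  also have "E*((2*r+3)*A + y^2*B) - (r+2)*(2*E*A) = E*y*A - E*A - E*y*(A - y*B)"
    by (simp add: algebra_simps power2_eq_square)
  finally show ?thesis by simp
qed

lemma Dp_deriv: "(Dp n has_real_derivative Gp (Suc n) y - 2 * Gp n y) (at y)"
proof (cases n)
  case 0
  have e: "Dp 0 = (\<lambda>y. - exp (-y) * y)" by (rule ext) (simp add: Dp_def)
  have "((\<lambda>y. - exp (-y) * y) has_real_derivative exp (-y) * y - exp (-y)) (at y)"
    by (auto intro!: derivative_eq_intros)
  then show ?thesis unfolding e 0
    by (rule DERIV_cong) (simp add: Gp_def algebra_simps)
next
  case (Suc k)
  have "((\<lambda>y. - exp (-y) * y * Q n y / fact (Suc n)) has_real_derivative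
        (exp (-y) * y * Q n y - exp (-y) * Q n y - exp (-y) * y * (Q n y - y * Q k y)) / fact (Suc n)) (at y)"
    unfolding Suc by (auto intro!: derivative_eq_intros Q_deriv simp del: fact_Suc) (simp add: field_simps del: fact_Suc)
  then show ?thesis unfolding Dp_def[abs_def]
  proof (rule DERIV_cong)
    have f: "fact (Suc (Suc k)) = (real k + 2) * ((real k + 1) * fact k :: real)" by (simp add: algebra_simps)
    have f1: "fact (Suc k) = (real k + 1) * (fact k :: real)" by (simp add: algebra_simps)
    have p: "fact k > (0::real)" by simp
    have p1: "real k + 1 \<noteq> 0" "real k + 2 \<noteq> 0" by linarith+
    show "(exp (- y) * y * Q n y - exp (- y) * Q n y - exp (- y) * y * (Q n y - y * Q k y)) / fact (Suc n) =
      Gp (Suc n) y - 2 * Gp n y"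
      unfolding Gp_def Suc f f1 Q.simps(3) mult.assoc[symmetric, of 2]
      by (rule aux_Dp[OF p]) simp
  qed
qed

lemma G_deriv: "(G (Suc n) has_real_derivative D n y) (at y)"
proof -
  have "(G (Suc n) has_real_derivative (if y \<ge> 0 then Dp n y else - Dp n (-y))) (at y)"
  proof (rule deriv_pieces[where fa="Gp (Suc n)" and fb="\<lambda>y. Gp (Suc n) (-y)"])
    show "(Gp (Suc n) has_real_derivative Dp n y) (at y)" for y by (rule Gp_deriv)
    show "((\<lambda>y. Gp (Suc n) (-y)) has_real_derivative - Dp n (-y)) (at y)" for y
      by (rule DERIV_cong[OF DERIV_chain2[OF Gp_deriv[of n "-y"] DERIV_minus[OF DERIV_ident]]]) simp
  qed (auto simp: G_def Dp_def)
  then show ?thesis by (simp add: D_def)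
qed

lemma D_deriv: "(D n has_real_derivative G (Suc n) y - 2 * G n y) (at y)"
proof -
  have "(D n has_real_derivative (if y \<ge> 0 then Gp (Suc n) y - 2 * Gp n y else Gp (Suc n) (-y) - 2 * Gp n (-y))) (at y)"
  proof (rule deriv_pieces[where fa="Dp n" and fb="\<lambda>y. - Dp n (-y)"])
    show "(Dp n has_real_derivative Gp (Suc n) y - 2 * Gp n y) (at y)" for y by (rule Dp_deriv)
    show "((\<lambda>y. - Dp n (-y)) has_real_derivative Gp (Suc n) (-y) - 2 * Gp n (-y)) (at y)" for y
      by (rule DERIV_cong[OF DERIV_minus[OF DERIV_chain2[OF Dp_deriv[of n "-y"] DERIV_minus[OF DERIV_ident]]]]) simp
  qed (auto simp: D_def Dp_def)
  then show ?thesis by (rule DERIV_cong) (auto simp: G_def)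
qed

lemma G_isCont: "isCont (G n) y"
  unfolding G_def[abs_def] Gp_def by (auto intro!: continuous_intros)

lemma D_isCont: "isCont (D n) y"
  using G_deriv DERIV_isCont D_deriv by blast

lemma G_nonneg: "G n y \<ge> 0"
  unfolding G_def Gp_def by (auto intro!: divide_nonneg_pos mult_nonneg_nonneg Q_nonneg)




lemma Q_bound: "\<exists>c\<ge>0. \<forall>t\<ge>0. Q n t \<le> c * (1+t)^n"
proof -
  have "(\<exists>c\<ge>0. \<forall>t\<ge>0. Q n t \<le> c * (1+t)^n) \<and> (\<exists>c\<ge>0. \<forall>t\<ge>0. Q (Suc n) t \<le> c * (1+t)^(Suc n))"
  proof (induction n)
    case 0
    show ?case by (auto intro!: exI[of _ 1])
  next
    case (Suc n)
    from Suc obtain c0 c1 where c0: "c0 \<ge> 0" "\<forall>t\<ge>0. Q n t \<le> c0 * (1+t)^n"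
      and c1: "c1 \<ge> 0" "\<forall>t\<ge>0. Q (Suc n) t \<le> c1 * (1+t)^(Suc n)" by blast
    have "\<forall>t\<ge>0. Q (Suc (Suc n)) t \<le> ((2*real n+3)*c1 + c0) * (1+t)^(Suc (Suc n))"
    proof (intro allI impI)
      fix t :: real assume t: "t \<ge> 0"
      have a: "(2*real n+3) * Q (Suc n) t \<le> (2*real n+3) * (c1 * (1+t)^(Suc n))"
        using c1 t by (intro mult_left_mono) auto
      have b: "c1 * (1+t)^(Suc n) \<le> c1 * (1+t)^(Suc (Suc n))"
        using c1 t by (intro mult_left_mono power_increasing) auto
      have c: "t^2 * Q n t \<le> (1+t)^2 * (c0 * (1+t)^n)"
        using c0 t by (intro mult_mono power_mono Q_nonneg) auto
      have d: "(1+t)^2 * (c0 * (1+t)^n) = c0 * (1+t)^(Suc (Suc n))"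
        by (simp add: power2_eq_square algebra_simps)
      have e: "(2*real n+3) * Q (Suc n) t \<le> (2*real n+3) * (c1 * (1+t)^(Suc (Suc n)))"
        using order.trans[OF a mult_left_mono[OF b]] by simp
      have q: "Q (Suc (Suc n)) t = (2*real n+3) * Q (Suc n) t + t^2 * Q n t" by simp
      have "Q (Suc (Suc n)) t \<le> (2*real n+3) * (c1 * (1+t)^(Suc (Suc n))) + c0 * (1+t)^(Suc (Suc n))"
        unfolding q using e c d by linarith
      then show "Q (Suc (Suc n)) t \<le> ((2*real n+3)*c1 + c0) * (1+t)^(Suc (Suc n))"
        by (simp add: algebra_simps)
    qed
    moreover have "(2*real n+3)*c1 + c0 \<ge> 0" using c0 c1 by simp
    ultimately show ?case using c1 by blast
  qed
  then show ?thesis by blast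
qed

lemma decay_top:
  fixes h :: "real \<Rightarrow> real"
  assumes "\<And>u. \<bar>h u\<bar> \<le> c * (1+\<bar>u\<bar>)^N * exp (-\<bar>u\<bar>)"
  shows "((\<lambda>u. exp (y - u) * h u) \<longlongrightarrow> 0) at_top"
proof (rule Lim_null_comparison)
  show "\<forall>\<^sub>F u in at_top. norm (exp (y - u) * h u) \<le> c * exp (y+1) * ((1+u)^N / exp (1+u)) * exp (-u)"
    using eventually_ge_at_top[of 0]
  proof eventually_elim
    case (elim u)
    have "norm (exp (y - u) * h u) = exp (y - u) * \<bar>h u\<bar>" by (simp add: abs_mult)
    also have "\<dots> \<le> exp (y - u) * (c * (1+u)^N * exp (-u))"
      using assms[of u] elim by (intro mult_left_mono) auto
    also have "\<dots> = c * exp (y+1) * ((1+u)^N / exp (1+u)) * exp (-u)"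
      by (simp add: exp_diff exp_add exp_minus field_simps)
    finally show ?case .
  qed
  have f1: "filterlim (\<lambda>u::real. 1+u) at_top at_top"
    by (rule filterlim_tendsto_add_at_top[OF tendsto_const filterlim_ident])
  have 1: "((\<lambda>u::real. (1+u)^N / exp (1+u)) \<longlongrightarrow> 0) at_top"
    using filterlim_compose[OF tendsto_power_div_exp_0[of N] f1] .
  have 2: "((\<lambda>u::real. exp (-u)) \<longlongrightarrow> 0) at_top"
    by (rule filterlim_compose[OF exp_at_bot filterlim_uminus_at_bot_at_top])
  show "((\<lambda>u. c * exp (y+1) * ((1+u)^N / exp (1+u)) * exp (-u)) \<longlongrightarrow> 0) at_top"
    using tendsto_mult[OF tendsto_mult[OF tendsto_const 1] 2] by simp
qed

lemma decay_bot:
  fixes h :: "real \<Rightarrow> real"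
  assumes "\<And>u. \<bar>h u\<bar> \<le> c * (1+\<bar>u\<bar>)^N * exp (-\<bar>u\<bar>)"
  shows "((\<lambda>u. exp (u - y) * h u) \<longlongrightarrow> 0) at_bot"
proof -
  have "((\<lambda>u. exp (-y - u) * h (-u)) \<longlongrightarrow> 0) at_top"
    by (rule decay_top[where c=c and N=N]) (metis abs_minus_cancel assms)
  moreover have "(\<lambda>u. exp (-y - u) * h (-u)) = (\<lambda>x. exp (-x - y) * h (-x))"
    by (rule ext) (simp add: algebra_simps)
  ultimately show ?thesis unfolding filterlim_at_bot_mirror by simp
qed

lemma G_bound: "\<exists>c. \<forall>u. \<bar>G n u\<bar> \<le> c * (1+\<bar>u\<bar>)^n * exp (-\<bar>u\<bar>)"
proof -
  obtain c where c: "c \<ge> 0" "\<forall>t\<ge>0. Q n t \<le> c * (1+t)^n" using Q_bound by blast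
  have "\<bar>G n u\<bar> \<le> (c / fact n) * (1+\<bar>u\<bar>)^n * exp (-\<bar>u\<bar>)" for u
  proof -
    have "\<bar>G n u\<bar> = exp (-\<bar>u\<bar>) * Q n \<bar>u\<bar> / fact n"
      unfolding G_def Gp_def using Q_nonneg[of "\<bar>u\<bar>" n] by simp
    also have "\<dots> \<le> exp (-\<bar>u\<bar>) * (c * (1+\<bar>u\<bar>)^n) / fact n"
      using c by (intro divide_right_mono mult_left_mono) auto
    finally show ?thesis by (simp add: algebra_simps)
  qed
  then show ?thesis by blast
qed

lemma D_bound: "\<exists>c. \<forall>u. \<bar>D n u\<bar> \<le> c * (1+\<bar>u\<bar>)^(Suc n) * exp (-\<bar>u\<bar>)"
proof -
  obtain c where c: "c \<ge> 0" "\<forall>t\<ge>0. Q n t \<le> c * (1+t)^n" using Q_bound by blast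
  have "\<bar>D n u\<bar> \<le> (c / fact (Suc n)) * (1+\<bar>u\<bar>)^(Suc n) * exp (-\<bar>u\<bar>)" for u
  proof -
    have "\<bar>D n u\<bar> = exp (-\<bar>u\<bar>) * (\<bar>u\<bar> * Q n \<bar>u\<bar>) / fact (Suc n)"
      unfolding D_def Dp_def using Q_nonneg[of "\<bar>u\<bar>" n] by (auto simp: abs_mult)
    also have "\<dots> \<le> exp (-\<bar>u\<bar>) * ((1+\<bar>u\<bar>) * (c * (1+\<bar>u\<bar>)^n)) / fact (Suc n)"
      using c Q_nonneg[of "\<bar>u\<bar>" n] by (intro divide_right_mono mult_left_mono mult_mono) auto
    also have "\<dots> = (c / fact (Suc n)) * (1+\<bar>u\<bar>)^(Suc n) * exp (-\<bar>u\<bar>)"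
      by (simp add: field_simps del: fact_Suc)
    finally show ?thesis .
  qed
  then show ?thesis by blast
qed




lemma G_meas[measurable]: "G n \<in> borel_measurable borel"
  by (rule borel_measurable_continuous_onI) (simp add: continuous_at_imp_continuous_on G_isCont)

lemma D_meas[measurable]: "D n \<in> borel_measurable borel"
  by (rule borel_measurable_continuous_onI) (simp add: continuous_at_imp_continuous_on D_isCont)

lemma GD_bound: "\<exists>c. \<forall>u. \<bar>a * G (Suc n) u + b * D n u\<bar> \<le> c * (1+\<bar>u\<bar>)^(Suc n) * exp (-\<bar>u\<bar>)"
proof -
  obtain c1 where c1: "\<forall>u. \<bar>G (Suc n) u\<bar> \<le> c1 * (1+\<bar>u\<bar>)^(Suc n) * exp (-\<bar>u\<bar>)" using G_bound by blast
  obtain c2 where c2: "\<forall>u. \<bar>D n u\<bar> \<le> c2 * (1+\<bar>u\<bar>)^(Suc n) * exp (-\<bar>u\<bar>)" using D_bound by blast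
  have "\<bar>a * G (Suc n) u + b * D n u\<bar> \<le> (\<bar>a\<bar> * c1 + \<bar>b\<bar> * c2) * (1+\<bar>u\<bar>)^(Suc n) * exp (-\<bar>u\<bar>)" for u
  proof -
    have "\<bar>a * G (Suc n) u + b * D n u\<bar> \<le> \<bar>a\<bar> * \<bar>G (Suc n) u\<bar> + \<bar>b\<bar> * \<bar>D n u\<bar>"
      by (simp add: abs_mult[symmetric] abs_triangle_ineq)
    also have "\<dots> \<le> \<bar>a\<bar> * (c1 * (1+\<bar>u\<bar>)^(Suc n) * exp (-\<bar>u\<bar>)) + \<bar>b\<bar> * (c2 * (1+\<bar>u\<bar>)^(Suc n) * exp (-\<bar>u\<bar>))"
      using c1 c2 by (intro add_mono mult_left_mono) auto
    finally show ?thesis by (simp add: algebra_simps)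
  qed
  then show ?thesis by blast
qed

lemma conv_key:
  shows "integrable lborel (\<lambda>u. G n u * exp (-\<bar>y-u\<bar>))"
    and "(LINT u|lborel. G n u * exp (-\<bar>y-u\<bar>)) = G (Suc n) y"
proof -
  define F1 where "F1 u = exp (u-y) * (G (Suc n) u - D n u) / 2" for u
  define F2 where "F2 u = - exp (y-u) * (G (Suc n) u + D n u) / 2" for u
  define f1 where "f1 u = G n u * exp (u-y)" for u
  define f2 where "f2 u = G n u * exp (y-u)" for u
  have d1: "(F1 has_real_derivative f1 x) (at x)" for x
  proof -
    have "(F1 has_real_derivative (exp (x-y) * (G (Suc n) x - D n x) + exp (x-y) * (D n x - (G (Suc n) x - 2 * G n x))) / 2) (at x)"
      unfolding F1_def[abs_def] by (auto intro!: derivative_eq_intros G_deriv D_deriv)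
    then show ?thesis by (rule DERIV_cong) (simp add: f1_def algebra_simps)
  qed
  have d2: "(F2 has_real_derivative f2 x) (at x)" for x
  proof -
    have "(F2 has_real_derivative (exp (y-x) * (G (Suc n) x + D n x) - exp (y-x) * (D n x + (G (Suc n) x - 2 * G n x))) / 2) (at x)"
      unfolding F2_def[abs_def] by (auto intro!: derivative_eq_intros G_deriv D_deriv) (simp add: field_simps)
    then show ?thesis by (rule DERIV_cong) (simp add: f2_def algebra_simps)
  qed
  have cf1: "isCont f1 x" for x unfolding f1_def[abs_def] by (auto intro!: continuous_intros G_isCont)
  have cf2: "isCont f2 x" for x unfolding f2_def[abs_def] by (auto intro!: continuous_intros G_isCont)
  obtain c1 where c1: "\<forall>u. \<bar>(1/2) * G (Suc n) u + (-1/2) * D n u\<bar> \<le> c1 * (1+\<bar>u\<bar>)^(Suc n) * exp (-\<bar>u\<bar>)"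
    using GD_bound by blast
  obtain c2 where c2: "\<forall>u. \<bar>(-1/2) * G (Suc n) u + (-1/2) * D n u\<bar> \<le> c2 * (1+\<bar>u\<bar>)^(Suc n) * exp (-\<bar>u\<bar>)"
    using GD_bound by blast
  have lim1: "(F1 \<longlongrightarrow> 0) at_bot"
  proof -
    have "((\<lambda>u. exp (u - y) * ((1/2) * G (Suc n) u + (-1/2) * D n u)) \<longlongrightarrow> 0) at_bot"
      by (rule decay_bot) (use c1 in blast)
    moreover have "(\<lambda>u. exp (u - y) * ((1/2) * G (Suc n) u + (-1/2) * D n u)) = F1"
      by (rule ext) (simp add: F1_def algebra_simps)
    ultimately show ?thesis by simp
  qed
  have lim2: "(F2 \<longlongrightarrow> 0) at_top"
  proof -
    have "((\<lambda>u. exp (y - u) * ((-1/2) * G (Suc n) u + (-1/2) * D n u)) \<longlongrightarrow> 0) at_top"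
      by (rule decay_top) (use c2 in blast)
    moreover have "(\<lambda>u. exp (y - u) * ((-1/2) * G (Suc n) u + (-1/2) * D n u)) = F2"
      by (rule ext) (simp add: F2_def algebra_simps)
    ultimately show ?thesis by simp
  qed
  have cF1: "(F1 \<longlongrightarrow> F1 y) (at_left y)" using DERIV_isCont[OF d1[of y]]
    by (simp add: isCont_def filterlim_at_split)
  have cF2: "(F2 \<longlongrightarrow> F2 y) (at_right y)" using DERIV_isCont[OF d2[of y]]
    by (simp add: isCont_def filterlim_at_split)
  have fA: "((F1 \<circ> real_of_ereal) \<longlongrightarrow> 0) (at_right (-\<infinity>))" using lim1 by (simp add: ereal_tendsto_simps)
  have fB: "((F1 \<circ> real_of_ereal) \<longlongrightarrow> F1 y) (at_left (ereal y))" using cF1 by (simp add: ereal_tendsto_simps)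
  have gA: "((F2 \<circ> real_of_ereal) \<longlongrightarrow> F2 y) (at_right (ereal y))" using cF2 by (simp add: ereal_tendsto_simps)
  have gB: "((F2 \<circ> real_of_ereal) \<longlongrightarrow> 0) (at_left \<infinity>)" using lim2 by (simp add: ereal_tendsto_simps)
  have nn1: "AE x in lborel. -\<infinity> < ereal x \<longrightarrow> ereal x < ereal y \<longrightarrow> 0 \<le> f1 x"
    by (auto simp: f1_def G_nonneg)
  have nn2: "AE x in lborel. ereal y < ereal x \<longrightarrow> ereal x < \<infinity> \<longrightarrow> 0 \<le> f2 x"
    by (auto simp: f2_def G_nonneg)
  note I1 = interval_integral_FTC_nonneg[where a="-\<infinity>" and b="ereal y" and F=F1 and f=f1 and A=0 and B="F1 y",
      OF _ d1 cf1 nn1 fA fB, simplified]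
  note I2 = interval_integral_FTC_nonneg[where a="ereal y" and b="\<infinity>" and F=F2 and f=f2 and A="F2 y" and B=0,
      OF _ d2 cf2 nn2 gA gB, simplified]
  have ae: "AE u in lborel. G n u * exp (-\<bar>y-u\<bar>) = indicator {..<y} u * f1 u + indicator {y<..} u * f2 u"
    using AE_lborel_singleton[of y]
    by eventually_elim (auto simp: f1_def f2_def indicator_def)
  have meas: "(\<lambda>u. G n u * exp (-\<bar>y-u\<bar>)) \<in> borel_measurable lborel"
             "(\<lambda>u. indicator {..<y} u * f1 u + indicator {y<..} u * f2 u) \<in> borel_measurable lborel"
    unfolding f1_def f2_def by measurable
  have int1: "integrable lborel (\<lambda>u. indicator {..<y} u * f1 u)"
    using I1(1) by (simp add: set_integrable_def)
  have int2: "integrable lborel (\<lambda>u. indicator {y<..} u * f2 u)"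
    using I2(1) by (simp add: set_integrable_def)
  show "integrable lborel (\<lambda>u. G n u * exp (-\<bar>y-u\<bar>))"
    using integrable_cong_AE[OF meas ae] Bochner_Integration.integrable_add[OF int1 int2] by simp
  have "(LINT u|lborel. G n u * exp (-\<bar>y-u\<bar>)) = (LINT u|lborel. indicator {..<y} u * f1 u + indicator {y<..} u * f2 u)"
    by (rule integral_cong_AE[OF meas ae])
  also have "\<dots> = (LINT u|lborel. indicator {..<y} u * f1 u) + (LINT u|lborel. indicator {y<..} u * f2 u)"
    by (rule Bochner_Integration.integral_add[OF int1 int2])
  also have "(LINT u|lborel. indicator {..<y} u * f1 u) = F1 y"
    using I1(2) by (simp add: interval_lebesgue_integral_def set_lebesgue_integral_def)
  also have "(LINT u|lborel. indicator {y<..} u * f2 u) = - F2 y"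
    using I2(2) by (simp add: interval_lebesgue_integral_def set_lebesgue_integral_def)
  also have "F1 y + - F2 y = G (Suc n) y"
    by (simp add: F1_def F2_def field_simps)
  finally show "(LINT u|lborel. G n u * exp (-\<bar>y-u\<bar>)) = G (Suc n) y" .
qed




definition kf :: "real \<Rightarrow> real \<Rightarrow> real \<Rightarrow> real" where
  "kf \<nu> y t = exp (-y * cosh t) * cosh (\<nu> * t)"

definition Kp :: "real \<Rightarrow> real \<Rightarrow> real" where
  "Kp \<nu> y = (LINT t|lborel. indicator {0<..} t * kf \<nu> y t)"

lemma kf_meas[measurable]: "kf \<nu> y \<in> borel_measurable borel"
  by (rule borel_measurable_continuous_onI) (auto simp: kf_def[abs_def] intro!: continuous_intros)

lemma exp_minus_integrable: "integrable lborel (\<lambda>t::real. indicator {0<..} t * exp (-t))"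
proof -
  have d: "((\<lambda>t. - exp (-t)) has_real_derivative exp (-x)) (at x)" for x :: real
    by (auto intro!: derivative_eq_intros)
  have A: "(((\<lambda>t. - exp (-t)) \<circ> real_of_ereal) \<longlongrightarrow> -1) (at_right (0::ereal))"
    unfolding zero_ereal_def ereal_tendsto_simps by (auto intro!: tendsto_eq_intros)
  have B: "(((\<lambda>t. - exp (-t)) \<circ> real_of_ereal) \<longlongrightarrow> 0) (at_left \<infinity>)"
    unfolding ereal_tendsto_simps
    using tendsto_minus[OF filterlim_compose[OF exp_at_bot filterlim_uminus_at_bot_at_top]] by simp
  have "set_integrable lborel (einterval 0 \<infinity>) (\<lambda>t. exp (-t))"
    by (rule interval_integral_FTC_nonneg(1)[OF _ d _ _ A B]) auto
  then show ?thesis by (simp add: set_integrable_def zero_ereal_def)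
qed

lemma cosh_ge_sq: "(t::real) \<ge> 0 \<Longrightarrow> cosh t \<ge> t^2 / 8"
proof -
  assume t: "t \<ge> 0"
  have "exp (t/2) \<ge> 1 + t/2" by (rule exp_ge_add_one_self)
  then have "exp (t/2)^2 \<ge> (1 + t/2)^2" using t by (intro power_mono) auto
  moreover have "exp (t/2)^2 = exp t" by (simp add: power2_eq_square exp_add[symmetric])
  moreover have "cosh t \<ge> exp t / 2" unfolding cosh_def by (simp add: field_simps)
  moreover have "(1 + t/2)^2 \<ge> t^2/4" using t by (simp add: power2_eq_square field_simps)
  ultimately show ?thesis by linarith
qed

lemma exp_cosh_bound:
  fixes y t \<nu> :: real
  assumes y: "y > 0" and t: "t \<ge> 0"
  shows "exp (-y * cosh t) * exp (\<bar>\<nu>\<bar> * t) \<le> exp (2 * (\<bar>\<nu>\<bar>+1)^2 / y) * exp (-t)"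
proof -
  define k where "k = \<bar>\<nu>\<bar> + 1"
  have "y * cosh t \<ge> y * (t^2/8)" using cosh_ge_sq[OF t] y by (intro mult_left_mono) auto
  moreover have "y * (t^2/8) - k * t + 2 * k^2 / y = (y/8) * (t - 4*k/y)^2"
    using y by (simp add: power2_eq_square field_simps)
  moreover have "(y/8) * (t - 4*k/y)^2 \<ge> 0" using y by simp
  ultimately have "-y * cosh t + \<bar>\<nu>\<bar> * t \<le> 2 * k^2 / y - t" unfolding k_def by (simp add: algebra_simps)
  then show ?thesis unfolding k_def by (simp add: exp_add[symmetric])
qed

lemma cosh_le_exp_abs: "cosh (x::real) \<le> exp \<bar>x\<bar>"
  unfolding cosh_def by (cases "x \<ge> 0") (auto simp: field_simps)

lemma sinh_le_exp_abs: "\<bar>sinh (x::real)\<bar> \<le> exp \<bar>x\<bar>"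
  unfolding sinh_def by (cases "x \<ge> 0") (auto simp: field_simps abs_le_iff)

lemma kf_bound:
  fixes y t \<nu> :: real
  assumes "y > 0" "t \<ge> 0"
  shows "\<bar>kf \<nu> y t\<bar> \<le> exp (2 * (\<bar>\<nu>\<bar>+1)^2 / y) * exp (-t)"
proof -
  have "\<bar>kf \<nu> y t\<bar> = exp (-y * cosh t) * cosh (\<nu> * t)" unfolding kf_def by simp
  also have "\<dots> \<le> exp (-y * cosh t) * exp (\<bar>\<nu>\<bar> * t)"
    using cosh_le_exp_abs[of "\<nu>*t"] assms by (intro mult_left_mono) (auto simp: abs_mult)
  also have "\<dots> \<le> exp (2 * (\<bar>\<nu>\<bar>+1)^2 / y) * exp (-t)" by (rule exp_cosh_bound[OF assms])
  finally show ?thesis .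
qed

lemma sf_bound:
  fixes y t \<nu> :: real
  assumes "y > 0" "t \<ge> 0"
  shows "\<bar>exp (-y * cosh t) * sinh (\<nu> * t)\<bar> \<le> exp (2 * (\<bar>\<nu>\<bar>+1)^2 / y) * exp (-t)"
proof -
  have "\<bar>exp (-y * cosh t) * sinh (\<nu> * t)\<bar> = exp (-y * cosh t) * \<bar>sinh (\<nu> * t)\<bar>" by (simp add: abs_mult)
  also have "\<dots> \<le> exp (-y * cosh t) * exp (\<bar>\<nu>\<bar> * t)"
    using sinh_le_exp_abs[of "\<nu>*t"] assms by (intro mult_left_mono) (auto simp: abs_mult)
  also have "\<dots> \<le> exp (2 * (\<bar>\<nu>\<bar>+1)^2 / y) * exp (-t)" by (rule exp_cosh_bound[OF assms])
  finally show ?thesis .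
qed

lemma kf_integrable:
  assumes "y > 0"
  shows "integrable lborel (\<lambda>t. indicator {0<..} t * kf \<nu> y t)"
proof (rule Bochner_Integration.integrable_bound)
  show "integrable lborel (\<lambda>t::real. exp (2 * (\<bar>\<nu>\<bar>+1)^2 / y) * (indicator {0<..} t * exp (-t)))"
    using exp_minus_integrable by simp
  show "(\<lambda>t. indicator {0<..} t * kf \<nu> y t) \<in> borel_measurable lborel" by measurable
  show "AE t in lborel. norm (indicator {0<..} t * kf \<nu> y t) \<le> norm (exp (2 * (\<bar>\<nu>\<bar>+1)^2 / y) * (indicator {0<..} t * exp (-t)))"
    using kf_bound[OF assms] by (auto simp: indicator_def)
qed




lemma Kp_rec:
  assumes y: "y > 0"
  shows "Kp (\<nu>+1) y = Kp (\<nu>-1) y + 2*\<nu>/y * Kp \<nu> y"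
proof -
  define F where "F t = exp (-y * cosh t) * sinh (\<nu> * t)" for t
  define f where "f t = (-y/2) * kf (\<nu>+1) y t + (y/2) * kf (\<nu>-1) y t + \<nu> * kf \<nu> y t" for t
  have sc: "sinh t * sinh (\<nu> * t) = (cosh ((\<nu>+1) * t) - cosh ((\<nu>-1) * t)) / 2" for t :: real
  proof -
    have "cosh ((\<nu>+1) * t) = cosh (\<nu>*t + t)" by (simp add: algebra_simps)
    moreover have "cosh ((\<nu>-1) * t) = cosh (\<nu>*t - t)" by (simp add: algebra_simps)
    ultimately show ?thesis by (simp add: cosh_add cosh_diff)
  qed
  have d: "(F has_vector_derivative f x) (at x)" for x
  proof -
    have "(F has_real_derivative exp (-y * cosh x) * (-y * sinh x) * sinh (\<nu> * x) + exp (-y * cosh x) * (cosh (\<nu> * x) * \<nu>)) (at x)"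
      unfolding F_def[abs_def] by (auto intro!: derivative_eq_intros)
    moreover have "exp (-y * cosh x) * (-y * sinh x) * sinh (\<nu> * x) + exp (-y * cosh x) * (cosh (\<nu> * x) * \<nu>) = f x"
    proof -
      have e: "cosh ((\<nu>+1)*x) = cosh ((\<nu>-1)*x) + 2*(sinh x * sinh (\<nu>*x))" using sc[of x] by simp
      show ?thesis unfolding f_def kf_def e by (simp add: algebra_simps)
    qed
    ultimately show ?thesis by (simp add: has_real_derivative_iff_has_vector_derivative)
  qed
  have cf: "isCont f x" for x unfolding f_def kf_def by (auto intro!: continuous_intros)
  have i1: "integrable lborel (\<lambda>t. indicator {0<..} t * kf (\<nu>+1) y t)" by (rule kf_integrable[OF y])
  have i2: "integrable lborel (\<lambda>t. indicator {0<..} t * kf (\<nu>-1) y t)" by (rule kf_integrable[OF y])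
  have i3: "integrable lborel (\<lambda>t. indicator {0<..} t * kf \<nu> y t)" by (rule kf_integrable[OF y])
  have eqf: "(\<lambda>t. indicator {0<..} t * f t) = (\<lambda>t. (-y/2) * (indicator {0<..} t * kf (\<nu>+1) y t) +
      (y/2) * (indicator {0<..} t * kf (\<nu>-1) y t) + \<nu> * (indicator {0<..} t * kf \<nu> y t))"
    by (rule ext) (simp add: f_def algebra_simps)
  have intf: "integrable lborel (\<lambda>t. indicator {0<..} t * f t)"
    unfolding eqf using i1 i2 i3 by simp
  have si: "set_integrable lborel (einterval 0 \<infinity>) f"
    using intf by (simp add: set_integrable_def zero_ereal_def)
  have A: "((F \<circ> real_of_ereal) \<longlongrightarrow> 0) (at_right (0::ereal))"
  proof -
    have "isCont F 0" unfolding F_def by (auto intro!: continuous_intros)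
    then have "(F \<longlongrightarrow> F 0) (at_right 0)" by (simp add: isCont_def filterlim_at_split)
    then show ?thesis unfolding zero_ereal_def ereal_tendsto_simps by (simp add: F_def)
  qed
  have B: "((F \<circ> real_of_ereal) \<longlongrightarrow> 0) (at_left \<infinity>)"
    unfolding ereal_tendsto_simps
  proof (rule Lim_null_comparison)
    show "\<forall>\<^sub>F t in at_top. norm (F t) \<le> exp (2 * (\<bar>\<nu>\<bar>+1)^2 / y) * exp (-t)"
      using eventually_ge_at_top[of 0] by eventually_elim (use sf_bound[OF y] in \<open>auto simp: F_def\<close>)
    show "((\<lambda>t. exp (2 * (\<bar>\<nu>\<bar>+1)^2 / y) * exp (-t)) \<longlongrightarrow> 0) at_top"
      using tendsto_mult[OF tendsto_const filterlim_compose[OF exp_at_bot filterlim_uminus_at_bot_at_top]] by simp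
  qed
  have "(LBINT t=0..\<infinity>. f t) = 0 - 0"
    by (rule interval_integral_FTC_integrable[OF _ d cf si A B]) simp
  then have "(LINT t|lborel. indicator {0<..} t * f t) = 0"
    by (simp add: interval_lebesgue_integral_def set_lebesgue_integral_def zero_ereal_def)
  then have "(-y/2) * Kp (\<nu>+1) y + (y/2) * Kp (\<nu>-1) y + \<nu> * Kp \<nu> y = 0"
    unfolding eqf Kp_def using i1 i2 i3 by simp
  then show ?thesis using y by (simp add: field_simps)
qed




lemma besselK_Kp: "besselK \<nu> y = Kp \<nu> y"
proof -
  have "besselK \<nu> y = (LINT t|lborel. indicator {0..} t * kf \<nu> y t)"
    unfolding besselK_def set_lebesgue_integral_def kf_def by simp
  also have "\<dots> = Kp \<nu> y" unfolding Kp_def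
    by (rule integral_cong_AE) (auto intro!: eventually_mono[OF AE_lborel_singleton[of 0]] simp: indicator_def)
  finally show ?thesis .
qed

lemma Kp_half:
  assumes y: "y > 0"
  shows "Kp (1/2) y = sqrt pi / (exp y * sqrt (2*y))"
proof -
  define g where "g t = sqrt (2*y) * sinh (t/2)" for t
  define g' where "g' t = sqrt (2*y) * cosh (t/2) / 2" for t
  define f where "f x = exp (- (x\<^sup>2))" for x :: real
  have ch: "cosh t = 1 + 2 * sinh (t/2)^2" for t :: real
  proof -
    have "cosh t = cosh (2 * (t/2))" by simp
    also have "\<dots> = 1 + 2 * sinh (t/2)^2" unfolding cosh_double cosh_square_eq by simp
    finally show ?thesis .
  qed
  have fg: "f (g t) * g' t = (exp y * sqrt (2*y) / 2) * kf (1/2) y t" for t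
  proof -
    have "g t ^ 2 = 2 * y * sinh (t/2)^2" using y by (simp add: g_def power_mult_distrib)
    moreover have "exp (-y * cosh t) = exp (-y) * exp (-(2*y* sinh (t/2)^2))"
      unfolding ch by (simp add: exp_add[symmetric] algebra_simps)
    ultimately show ?thesis unfolding f_def g'_def kf_def
      by (simp add: exp_minus field_simps)
  qed
  have eq: "(\<lambda>x. indicator {0<..} x *\<^sub>R (f (g x) * g' x)) = (\<lambda>x. (exp y * sqrt (2*y) / 2) * (indicator {0<..} x * kf (1/2) y x))"
    by (rule ext) (simp only: fg, simp add: mult_ac)
  have si: "set_integrable lborel (einterval 0 \<infinity>) (\<lambda>t. f (g t) * g' t)"
    unfolding set_integrable_def zero_ereal_def einterval_eq_Ici eq
    by (rule Bochner_Integration.integrable_mult_right[OF kf_integrable[OF y]])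
  have h: "filterlim (\<lambda>t::real. t/2) at_top at_top"
    using filterlim_tendsto_pos_mult_at_top[OF tendsto_const[of "1/2::real"] _ filterlim_ident] by simp
  have s: "filterlim (\<lambda>t::real. sinh (t/2)) at_top at_top" by (rule filterlim_compose[OF sinh_real_at_top h])
  have gtop: "filterlim g at_top at_top"
    unfolding g_def using y by (intro filterlim_tendsto_pos_mult_at_top[OF tendsto_const _ s]) simp
  have A: "((ereal \<circ> g \<circ> real_of_ereal) \<longlongrightarrow> 0) (at_right 0)"
  proof -
    have "isCont g 0" unfolding g_def by (auto intro!: continuous_intros)
    then have "(g \<longlongrightarrow> 0) (at_right 0)" by (simp add: isCont_def filterlim_at_split g_def)
    then show ?thesis unfolding zero_ereal_def ereal_tendsto_simps by (simp add: o_def)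
  qed
  have B: "((ereal \<circ> g \<circ> real_of_ereal) \<longlongrightarrow> \<infinity>) (at_left \<infinity>)"
    unfolding ereal_tendsto_simps using gtop by (simp add: o_def tendsto_PInfty_eq_at_top)
  have sub: "(LBINT x=0..\<infinity>. f x) = (LBINT t=0..\<infinity>. f (g t) * g' t)"
    by (rule interval_integral_substitution_nonneg(2)[OF _ _ _ _ _ _ A B si])
       (use y in \<open>auto simp: g_def g'_def f_def intro!: derivative_eq_intros continuous_intros less_imp_le[OF cosh_real_pos]\<close>)
  have "(LBINT x=0..\<infinity>. f x) = (LINT x|lborel. indicator {0..} x *\<^sub>R exp (- (x\<^sup>2)))"
    unfolding interval_lebesgue_integral_def set_lebesgue_integral_def zero_ereal_def f_def
    by (simp, rule integral_cong_AE) (auto intro!: eventually_mono[OF AE_lborel_singleton[of 0]] simp: indicator_def)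
  also have "\<dots> = sqrt pi / 2" using gaussian_moment_0 by (rule has_bochner_integral_integral_eq)
  finally have l: "(LBINT x=0..\<infinity>. f x) = sqrt pi / 2" .
  have r: "(LBINT t=0..\<infinity>. f (g t) * g' t) = (exp y * sqrt (2*y) / 2) * Kp (1/2) y"
    unfolding interval_lebesgue_integral_def set_lebesgue_integral_def zero_ereal_def Kp_def
    by (simp only: einterval_eq_Ici eq if_True ereal_less_eq(1) PInfty_neq_ereal, simp)
  from sub l r have "(exp y * sqrt (2*y) / 2) * Kp (1/2) y = sqrt pi / 2" by simp
  then show ?thesis using y by (simp add: field_simps)
qed




lemma Kp_neg: "Kp (-\<nu>) y = Kp \<nu> y"
  unfolding Kp_def kf_def by simp

lemma Kp_closed:
  assumes y: "y > 0"
  shows "Kp (real n + 1/2) y = sqrt pi / (exp y * sqrt (2*y)) * Q n y / y^n"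
proof (induction n rule: less_induct)
  case (less n)
  define S where "S = sqrt pi / (exp y * sqrt (2*y))"
  have K0: "Kp (1/2) y = S" using Kp_half[OF y] by (simp add: S_def)
  show ?case
  proof (cases n)
    case 0 then show ?thesis using K0 by (simp add: S_def)
  next
    case (Suc k)
    show ?thesis
    proof (cases k)
      case 0
      have "Kp (1/2 + 1) y = Kp (1/2 - 1) y + 2*(1/2)/y * Kp (1/2) y" by (rule Kp_rec[OF y])
      moreover have "Kp (1/2 - 1) y = S" using Kp_neg[of "1/2" y] K0 by simp
      ultimately have "Kp (3/2) y = S + S / y" using K0 by simp
      then show ?thesis using Suc 0 y unfolding S_def[symmetric] by (simp add: field_simps)
    next
      case (Suc j)
      have IH1: "Kp (real j + 1/2) y = S * Q j y / y^j" using less \<open>n = Suc k\<close> Suc by (simp add: S_def)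
      have IH2: "Kp (real (Suc j) + 1/2) y = S * Q (Suc j) y / y^(Suc j)"
        using less.IH[of "Suc j"] \<open>n = Suc k\<close> Suc by (simp add: S_def)
      have R: "Kp ((real (Suc j) + 1/2) + 1) y = Kp ((real (Suc j) + 1/2) - 1) y + 2*(real (Suc j) + 1/2)/y * Kp (real (Suc j) + 1/2) y"
        by (rule Kp_rec[OF y])
      have eq1: "(real (Suc j) + 1/2) + 1 = real n + 1/2" using \<open>n = Suc k\<close> Suc by simp
      have eq2: "(real (Suc j) + 1/2) - 1 = real j + 1/2" by simp
      have e: "2*(real (Suc j) + 1/2) = 2*real j + 3" by simp
      have "Kp (real n + 1/2) y = S * Q j y / y^j + (2*real j + 3)/y * (S * Q (Suc j) y / y^(Suc j))"
        using R unfolding eq1 eq2 IH2 IH1 e .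
      also have "\<dots> = S * Q n y / y^n"
        using \<open>n = Suc k\<close> Suc y by (simp add: field_simps power2_eq_square)
      finally show ?thesis by (simp add: S_def)
    qed
  qed
qed

lemma conv_closed:
  fixes C a :: real and g :: "real \<Rightarrow> real"
  assumes "a > 0" and g: "\<And>xi. g xi = C * exp (- a * \<bar>xi\<bar>)"
  shows "conv_pow g (Suc n) x = C^(Suc n) / (2*pi*a)^n * G n (a*x)"
proof (induction n arbitrary: x)
  case 0
  show ?case using \<open>a > 0\<close> by (simp add: g G_def Gp_def abs_mult)
next
  case (Suc n)
  define K where "K = C^(Suc n) / (2*pi*a)^n"
  have cp: "conv_pow g (Suc n) = (\<lambda>x. K * G n (a*x))" using Suc by (auto simp: K_def)
  have "conv_pow g (Suc (Suc n)) x = 1/(2*pi) * (LINT \<eta>|lborel. (K * G n (a*\<eta>)) * (C * exp (- a * \<bar>x - \<eta>\<bar>)))"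
    by (simp add: nconv_def cp g)
  also have "(LINT \<eta>|lborel. (K * G n (a*\<eta>)) * (C * exp (- a * \<bar>x - \<eta>\<bar>))) =
      (LINT \<eta>|lborel. (K * C) * (G n (0 + a*\<eta>) * exp (- \<bar>a*x - (0 + a*\<eta>)\<bar>)))"
  proof -
    have "a * \<bar>x - \<eta>\<bar> = \<bar>a*x - a*\<eta>\<bar>" for \<eta> using \<open>a > 0\<close>
      by (simp add: abs_mult right_diff_distrib[symmetric])
    then show ?thesis by (simp add: mult_ac)
  qed
  also have "\<dots> = (K * C) * (LINT \<eta>|lborel. G n (0 + a*\<eta>) * exp (- \<bar>a*x - (0 + a*\<eta>)\<bar>))"
    by simp
  also have "(LINT \<eta>|lborel. G n (0 + a*\<eta>) * exp (- \<bar>a*x - (0 + a*\<eta>)\<bar>)) = G (Suc n) (a*x) / a"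
  proof -
    have "(LINT u|lborel. G n u * exp (- \<bar>a*x - u\<bar>)) = \<bar>a\<bar> *\<^sub>R (LINT \<eta>|lborel. G n (0 + a*\<eta>) * exp (- \<bar>a*x - (0 + a*\<eta>)\<bar>))"
      using \<open>a > 0\<close> by (intro lborel_integral_real_affine) simp
    then show ?thesis using conv_key(2)[of n "a*x"] \<open>a > 0\<close> by (simp add: field_simps)
  qed
  finally show ?case using \<open>a > 0\<close> by (simp add: K_def field_simps)
qed

lemma Q_ratio: "y \<ge> 0 \<Longrightarrow> y * Q n y \<le> Q (Suc n) y \<and> Q (Suc n) y \<le> (y + 2*real n + 1) * Q n y"
proof (induction n)
  case 0 then show ?case by simp
next
  case (Suc n)
  have y: "y \<ge> 0" by fact
  have IH: "y * Q n y \<le> Q (Suc n) y" "Q (Suc n) y \<le> (y + 2*real n + 1) * Q n y" using Suc by auto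
  have q: "Q (Suc (Suc n)) y = (2*real n + 3) * Q (Suc n) y + y^2 * Q n y" by simp
  have q0: "Q n y \<ge> 0" "Q (Suc n) y \<ge> 0" using Q_nonneg[OF y] by auto
  have b: "Q (Suc (Suc n)) y \<le> (y + 2*real (Suc n) + 1) * Q (Suc n) y"
  proof -
    have "y^2 * Q n y \<le> y * Q (Suc n) y"
      using mult_left_mono[OF IH(1) y] by (simp add: power2_eq_square mult_ac)
    then show ?thesis unfolding q by (simp add: algebra_simps)
  qed
  have a: "y * Q (Suc n) y \<le> Q (Suc (Suc n)) y"
  proof (cases "y \<le> 2*real n + 3")
    case True
    have "y * Q (Suc n) y \<le> (2*real n + 3) * Q (Suc n) y" using True q0 by (intro mult_right_mono) auto
    moreover have "y^2 * Q n y \<ge> 0" using q0 by simp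
    ultimately show ?thesis unfolding q by linarith
  next
    case False
    have "(y - (2*real n + 3)) * Q (Suc n) y \<le> (y - (2*real n + 3)) * ((y + 2*real n + 1) * Q n y)"
      using False IH(2) by (intro mult_left_mono) auto
    also have "\<dots> = ((y - (2*real n + 3)) * (y + 2*real n + 1)) * Q n y" by simp
    also have "\<dots> \<le> y^2 * Q n y"
    proof (rule mult_right_mono[OF _ q0(1)])
      have "(y - (2*real n + 3)) * (y + 2*real n + 1) = y^2 - 2*y - (2*real n+3)*(2*real n+1)"
        by (simp add: algebra_simps power2_eq_square)
      moreover have "(2*real n+3)*(2*real n+1) \<ge> 0" by simp
      ultimately show "(y - (2*real n + 3)) * (y + 2*real n + 1) \<le> y^2" using y by linarith
    qed
    finally show ?thesis unfolding q by (simp add: algebra_simps)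
  qed
  show ?case using a b by simp
qed

lemma Q_le_poch: "y \<ge> 0 \<Longrightarrow> Q n y \<le> 2^n * pochhammer ((1+y)/2) n"
proof (induction n)
  case 0 then show ?case by simp
next
  case (Suc n)
  have "Q (Suc n) y \<le> (y + 2*real n + 1) * Q n y" using Q_ratio[OF Suc.prems] by blast
  also have "\<dots> \<le> (y + 2*real n + 1) * (2^n * pochhammer ((1+y)/2) n)"
    using Suc by (intro mult_left_mono) auto
  also have "\<dots> = 2^(Suc n) * pochhammer ((1+y)/2) (Suc n)"
    by (simp add: pochhammer_rec' field_simps)
  finally show ?case .
qed




lemma powr_half_split: "(b::real) \<ge> 0 \<Longrightarrow> b powr (real n + 1/2) = b^n * sqrt b"
proof (cases "b = 0")
  case True then show ?thesis by simp
next
  case False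
  assume "b \<ge> 0" then have "b > 0" using False by simp
  then show ?thesis by (simp add: powr_add powr_realpow powr_half_sqrt)
qed

lemma conv_explicit:
  fixes C a :: real and g :: "real \<Rightarrow> real"
  assumes "a > 0" and g: "\<And>xi. g xi = C * exp (- a * \<bar>xi\<bar>)"
  shows "conv_pow g (Suc n) x = C^(Suc n) / (2*pi*a)^n * (exp (- (a*\<bar>x\<bar>)) * Q n (a*\<bar>x\<bar>) / fact n)"
  using conv_closed[OF assms, of n x] \<open>a > 0\<close> by (simp add: G_def Gp_def abs_mult)

lemma part1:
  fixes C a :: real and g :: "real \<Rightarrow> real"
  assumes C: "C \<ge> 0" and a: "a > 0" and g: "\<And>xi. g xi = C * exp (- a * \<bar>xi\<bar>)"
    and xi: "xi \<noteq> 0"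
  shows "conv_pow g (Suc n) xi = 2 * sqrt (a * C) * (C * \<bar>xi\<bar> / (2 * pi)) powr (real (Suc n) - 1/2)
              * besselK (real (Suc n) - 1/2) (a * \<bar>xi\<bar>) / Gamma (real (Suc n))"
proof -
  define y where "y = a * \<bar>xi\<bar>"
  define b where "b = C * \<bar>xi\<bar> / (2 * pi)"
  have y: "y > 0" using a xi by (simp add: y_def)
  have b: "b \<ge> 0" using C by (simp add: b_def)
  have e1: "real (Suc n) - 1/2 = real n + 1/2" by simp
  have gam: "Gamma (real (Suc n)) = fact n" using Gamma_fact[of n] by (simp add: add.commute)
  have bk: "besselK (real n + 1/2) y = sqrt pi / (exp y * sqrt (2*y)) * Q n y / y^n"
    using Kp_closed[OF y] by (simp add: besselK_Kp)
  have key: "sqrt (a * C) * sqrt b * sqrt pi = (C/2) * sqrt (2*y)"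
  proof -
    have "sqrt (a * C) * sqrt b * sqrt pi = sqrt (a * C * b * pi)" by (simp add: real_sqrt_mult)
    also have "a * C * b * pi = (C/2)^2 * (2*y)" by (simp add: b_def y_def power2_eq_square field_simps)
    also have "sqrt ((C/2)^2 * (2*y)) = (C/2) * sqrt (2*y)" using C by (simp add: real_sqrt_mult)
    finally show ?thesis .
  qed
  have bn: "b^n / y^n = C^n / (2*pi*a)^n"
  proof -
    have "b / y = C / (2*pi*a)" using a xi by (simp add: b_def y_def field_simps)
    then show ?thesis by (metis power_divide)
  qed
  have "2 * sqrt (a * C) * (b^n * sqrt b) * (sqrt pi / (exp y * sqrt (2*y)) * Q n y / y^n) / fact n
      = 2 * (sqrt (a * C) * sqrt b * sqrt pi) / sqrt (2*y) * (b^n / y^n) * (exp (-y) * Q n y / fact n)"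
    by (simp add: exp_minus field_simps)
  also have "\<dots> = C^(Suc n) / (2*pi*a)^n * (exp (-y) * Q n y / fact n)"
    unfolding key bn using y by (simp add: field_simps)
  finally have R: "2 * sqrt (a * C) * (b^n * sqrt b) * (sqrt pi / (exp y * sqrt (2*y)) * Q n y / y^n) / fact n
      = C^(Suc n) / (2*pi*a)^n * (exp (-y) * Q n y / fact n)" .
  show ?thesis
    unfolding e1 gam b_def[symmetric] y_def[symmetric] powr_half_split[OF b] bk R
    using conv_explicit[OF a g, of n xi] by (simp add: y_def)
qed

lemma part2:
  fixes C a :: real and g :: "real \<Rightarrow> real"
  assumes C: "C \<ge> 0" and a: "a > 0" and g: "\<And>xi. g xi = C * exp (- a * \<bar>xi\<bar>)"
  shows "conv_pow g (Suc n) xi \<le> C * exp (- a * \<bar>xi\<bar>) * (C / (pi * a)) ^ (Suc n - 1)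
              * Gamma ((1 + a * \<bar>xi\<bar>) / 2 + real (Suc n) - 1)
              / (Gamma (real (Suc n)) * Gamma ((1 + a * \<bar>xi\<bar>) / 2))"
proof -
  define y where "y = a * \<bar>xi\<bar>"
  define s where "s = (1 + y) / 2"
  have y: "y \<ge> 0" using a by (simp add: y_def)
  have s: "s > 0" using y by (simp add: s_def)
  have gam: "Gamma (real (Suc n)) = fact n" using Gamma_fact[of n] by (simp add: add.commute)
  have sn: "s \<notin> \<int>\<^sub>\<le>\<^sub>0" using s nonpos_Ints_nonpos by fastforce
  have poch: "Gamma (s + real (Suc n) - 1) / Gamma s = pochhammer s n"
    using pochhammer_Gamma[OF sn, of n] by simp
  have L: "conv_pow g (Suc n) xi = (C * exp (-y) * (C / (pi * a))^n / fact n) * (Q n y / 2^n)"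
    using conv_explicit[OF a g, of n xi] unfolding y_def[symmetric]
    by (simp add: power_mult_distrib power_divide field_simps)
  have R: "C * exp (- a * \<bar>xi\<bar>) * (C / (pi * a)) ^ (Suc n - 1)
              * Gamma ((1 + a * \<bar>xi\<bar>) / 2 + real (Suc n) - 1)
              / (Gamma (real (Suc n)) * Gamma ((1 + a * \<bar>xi\<bar>) / 2))
         = (C * exp (-y) * (C / (pi * a))^n / fact n) * pochhammer s n"
  proof -
    have "C * exp (- a * \<bar>xi\<bar>) * (C / (pi * a)) ^ (Suc n - 1)
              * Gamma ((1 + a * \<bar>xi\<bar>) / 2 + real (Suc n) - 1)
              / (Gamma (real (Suc n)) * Gamma ((1 + a * \<bar>xi\<bar>) / 2))
        = (C * exp (-y) * (C / (pi * a))^n / fact n) * (Gamma (s + real (Suc n) - 1) / Gamma s)"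
      unfolding gam s_def y_def by simp
    then show ?thesis unfolding poch .
  qed
  have Qp: "Q n y / 2^n \<le> pochhammer s n"
    using Q_le_poch[OF y, of n] by (simp add: s_def field_simps)
  have nn: "C * exp (-y) * (C / (pi * a))^n / fact n \<ge> 0" using C a by simp
  show ?thesis unfolding L R by (rule mult_left_mono[OF Qp nn])
qed

theorem mainTheorem7:
  fixes C a :: real and g :: "real \<Rightarrow> real"
  assumes "C \<ge> 0" and "a > 0"
    and "\<And>xi. g xi = C * exp (- a * \<bar>xi\<bar>)"
  shows "(\<forall>m::nat. m \<ge> 1 \<longrightarrow> (\<forall>xi::real. xi \<noteq> 0 \<longrightarrow>
           conv_pow g m xi = 2 * sqrt (a * C) * (C * \<bar>xi\<bar> / (2 * pi)) powr (real m - 1/2)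
              * besselK (real m - 1/2) (a * \<bar>xi\<bar>) / Gamma (real m)))
       \<and> (\<forall>m::nat. m \<ge> 1 \<longrightarrow> (\<forall>xi::real.
           conv_pow g m xi \<le> C * exp (- a * \<bar>xi\<bar>) * (C / (pi * a)) ^ (m - 1)
              * Gamma ((1 + a * \<bar>xi\<bar>) / 2 + real m - 1)
              / (Gamma (real m) * Gamma ((1 + a * \<bar>xi\<bar>) / 2))))"
proof (intro conjI allI impI)
  fix m :: nat and xi :: real
  assume m: "m \<ge> 1" and xi: "xi \<noteq> 0"
  obtain n where n: "m = Suc n" using m by (cases m) auto
  show "conv_pow g m xi = 2 * sqrt (a * C) * (C * \<bar>xi\<bar> / (2 * pi)) powr (real m - 1/2)
              * besselK (real m - 1/2) (a * \<bar>xi\<bar>) / Gamma (real m)"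
    unfolding n by (rule part1[OF assms xi])
next
  fix m :: nat and xi :: real
  assume m: "m \<ge> 1"
  obtain n where n: "m = Suc n" using m by (cases m) auto
  show "conv_pow g m xi \<le> C * exp (- a * \<bar>xi\<bar>) * (C / (pi * a)) ^ (m - 1)
              * Gamma ((1 + a * \<bar>xi\<bar>) / 2 + real m - 1)
              / (Gamma (real m) * Gamma ((1 + a * \<bar>xi\<bar>) / 2))"
    unfolding n by (rule part2[OF assms])
qed


end
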